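(* Let $\{X_k\}_{k\ge0}$ and $\{Y_k\}_{k\ge0}$ be sequences of vectors in $\mathbb{R}^2$ with non-negative entries, and $\{M_k\}_{k\ge0}$ a sequence of $2\times2$ matrices, satisfying $X_{k+1}\le M_kX_k+Y_k$ (componentwise) for all $k\ge0$. Suppose $\sum_{k=0}^\infty\|Y_k\|<\infty$ and $$M_k=\begin{pmatrix}1&r\\ \alpha_k&\alpha_k\end{pmatrix}$$ for some fixed $r>0$ and non-negative reals $\alpha_k$ with $\sum_{k=0}^\infty\alpha_k<\infty$. Then: (1) the matrices $M_bM_{b-1}\cdots M_a$ are uniformly bounded over $0\le a<b<\infty$; (2) $\{X_k\}_{k\ge0}$ is uniformly bounded. *)

theory Defs
  imports "HOL-Analysis.Analysis"
begin

text \<open>Ordered matrix product: prodM M a b = M b ** M (b-1) ** ... ** M a for a \<le> b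
  (and the identity matrix when b < a).\<close>
fun prodM :: "(nat \<Rightarrow> real^2^2) \<Rightarrow> nat \<Rightarrow> nat \<Rightarrow> real^2^2" where
  "prodM M a 0 = (if a = 0 then M 0 else mat 1)"
| "prodM M a (Suc b) = (if a \<le> Suc b then (if a = Suc b then M (Suc b) else M (Suc b) ** prodM M a b) else mat 1)"

definition vle :: "real^2 \<Rightarrow> real^2 \<Rightarrow> bool" where
  "vle x y \<longleftrightarrow> (\<forall>i. x $ i \<le> y $ i)"

end

theory Submission
  imports Defs
begin

lemma norm_mat_le:
  fixes P :: "real^2^2"
  shows "norm P \<le> (\<Sum>i\<in>UNIV. \<Sum>j\<in>UNIV. \<bar>P$i$j\<bar>)"
proof -
  have "norm P \<le> (\<Sum>i\<in>UNIV. norm (P$i))"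
    unfolding norm_vec_def by (rule L2_set_le_sum) simp
  also have "\<dots> \<le> (\<Sum>i\<in>UNIV. \<Sum>j\<in>UNIV. \<bar>P$i$j\<bar>)"
    by (rule sum_mono) (rule norm_le_l1_cart)
  finally show ?thesis .
qed

lemma col_entry: "((P::real^2^2) *v axis j 1) $ i = P $ i $ j"
  by (simp add: matrix_vector_mult_def axis_def if_distrib cong: if_cong)

theorem proposition3p2:
  fixes X Y :: "nat \<Rightarrow> real^2" and M :: "nat \<Rightarrow> real^2^2"
    and \<alpha> :: "nat \<Rightarrow> real" and r :: real
  assumes X_nonneg: "\<And>k i. X k $ i \<ge> 0"
    and Y_nonneg: "\<And>k i. Y k $ i \<ge> 0"
    and rec: "\<And>k. vle (X (Suc k)) (M k *v X k + Y k)"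
    and Y_sum: "summable (\<lambda>k. norm (Y k))"
    and r_pos: "r > 0"
    and alpha_nonneg: "\<And>k. \<alpha> k \<ge> 0"
    and alpha_sum: "summable \<alpha>"
    and M_def: "\<And>k. M k = vector [vector [1, r], vector [\<alpha> k, \<alpha> k]]"
  shows "(\<exists>C. \<forall>a b. a < b \<longrightarrow> norm (prodM M a b) \<le> C)
       \<and> (\<exists>C. \<forall>k. norm (X k) \<le> C)"
proof -
  define V where "V = (\<lambda>x::real^2. x$1 + r * x$2)"
  define \<beta> where "\<beta> = max 1 r"
  have b0: "\<beta> \<ge> 1" unfolding \<beta>_def by simp
  have Mv1: "(M k *v x) $ 1 = x$1 + r * x$2" for k x
    by (simp add: M_def matrix_vector_mult_def sum_2)
  have Mv2: "(M k *v x) $ 2 = \<alpha> k * x$1 + \<alpha> k * x$2" for k x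
    by (simp add: M_def matrix_vector_mult_def sum_2)
  have nn2: "(\<forall>i. x $ i \<ge> 0) \<longleftrightarrow> x$1 \<ge> 0 \<and> x$2 \<ge> (0::real)" for x :: "real^2"
    by (simp add: forall_2)
  have step_nn: "\<forall>i. (M k *v x) $ i \<ge> 0" if "\<forall>i. x $ i \<ge> 0" for k x
    using that r_pos alpha_nonneg[of k] by (simp add: nn2 Mv1 Mv2)
  have step_V: "V (M k *v x) \<le> (1 + \<beta> * \<alpha> k) * V x" if "\<forall>i. x $ i \<ge> 0" for k x
  proof -
    have x1: "x$1 \<ge> 0" and x2: "x$2 \<ge> 0" using that by (auto simp: nn2)
    have a: "\<alpha> k \<ge> 0" by (rule alpha_nonneg)
    have "V (M k *v x) = (1 + r*\<alpha> k) * x$1 + r * (1 + \<alpha> k) * x$2"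
      by (simp add: V_def Mv1 Mv2 algebra_simps)
    also have "\<dots> \<le> (1 + \<beta> * \<alpha> k) * x$1 + r * (1 + \<beta> * \<alpha> k) * x$2"
    proof (rule add_mono)
      have "r * \<alpha> k \<le> \<beta> * \<alpha> k" using a by (simp add: \<beta>_def mult_right_mono)
      then show "(1 + r*\<alpha> k) * x$1 \<le> (1 + \<beta> * \<alpha> k) * x$1" using x1 by (simp add: mult_right_mono)
      have "\<alpha> k \<le> \<beta> * \<alpha> k" using a b0 by (simp add: mult_right_mono[of 1 \<beta>, simplified])
      then have "r * (1 + \<alpha> k) \<le> r * (1 + \<beta> * \<alpha> k)" using r_pos by simp
      then show "r * (1 + \<alpha> k) * x$2 \<le> r * (1 + \<beta> * \<alpha> k) * x$2" using x2 by (simp add: mult_right_mono)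
    qed
    also have "\<dots> = (1 + \<beta> * \<alpha> k) * V x" by (simp add: V_def algebra_simps)
    finally show ?thesis .
  qed
  have exp_step: "(1 + \<beta> * \<alpha> k) * exp t \<le> exp (t + \<beta> * \<alpha> k)" for k t
  proof -
    have "1 + \<beta> * \<alpha> k \<le> exp (\<beta> * \<alpha> k)" by (rule exp_ge_add_one_self)
    then have "(1 + \<beta> * \<alpha> k) * exp t \<le> exp (\<beta> * \<alpha> k) * exp t" by simp
    then show ?thesis by (simp add: exp_add)
  qed
  have Vnn: "V x \<ge> 0" if "\<forall>i. x $ i \<ge> 0" for x
    using that r_pos by (simp add: V_def nn2)
  have prod_bd: "(\<forall>i. (prodM M a b *v x) $ i \<ge> 0) \<and>
      V (prodM M a b *v x) \<le> exp (\<beta> * (\<Sum>k=a..b. \<alpha> k)) * V x"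
    if "a \<le> b" "\<forall>i. x $ i \<ge> 0" for a b x
    using that(1)
  proof (induction b)
    case 0
    then have a0: "a = 0" by simp
    have "V (M 0 *v x) \<le> (1 + \<beta> * \<alpha> 0) * V x" by (rule step_V[OF that(2)])
    also have "\<dots> \<le> exp (\<beta> * \<alpha> 0) * V x"
      using Vnn[OF that(2)] exp_ge_add_one_self[of "\<beta> * \<alpha> 0"] by (simp add: mult_right_mono)
    finally show ?case using a0 step_nn[OF that(2)] by simp
  next
    case (Suc b)
    show ?case
    proof (cases "a = Suc b")
      case True
      have "V (M (Suc b) *v x) \<le> (1 + \<beta> * \<alpha> (Suc b)) * V x" by (rule step_V[OF that(2)])
      also have "\<dots> \<le> exp (\<beta> * \<alpha> (Suc b)) * V x"
        using Vnn[OF that(2)] exp_ge_add_one_self[of "\<beta> * \<alpha> (Suc b)"] by (simp add: mult_right_mono)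
      finally show ?thesis using True step_nn[OF that(2)] by simp
    next
      case False
      with Suc.prems have ab: "a \<le> b" by simp
      note IH = Suc.IH[OF ab]
      define y where "y = prodM M a b *v x"
      have yn: "\<forall>i. y $ i \<ge> 0" using IH y_def by simp
      have eq: "prodM M a (Suc b) *v x = M (Suc b) *v y"
        using False Suc.prems by (simp add: y_def matrix_vector_mul_assoc)
      have "V (M (Suc b) *v y) \<le> (1 + \<beta> * \<alpha> (Suc b)) * V y" by (rule step_V[OF yn])
      also have "\<dots> \<le> (1 + \<beta> * \<alpha> (Suc b)) * (exp (\<beta> * (\<Sum>k=a..b. \<alpha> k)) * V x)"
        using IH y_def alpha_nonneg[of "Suc b"] b0 by (intro mult_left_mono) auto
      also have "\<dots> \<le> exp (\<beta> * (\<Sum>k=a..b. \<alpha> k) + \<beta> * \<alpha> (Suc b)) * V x"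
        using exp_step[of "Suc b" "\<beta> * (\<Sum>k=a..b. \<alpha> k)"] Vnn[OF that(2)]
        by (metis mult.assoc mult_right_mono)
      also have "\<dots> = exp (\<beta> * (\<Sum>k=a..Suc b. \<alpha> k)) * V x"
        using ab by (simp add: sum.cl_ivl_Suc distrib_left)
      finally show ?thesis using eq step_nn[OF yn] by simp
    qed
  qed
  define A where "A = suminf \<alpha>"
  define E where "E = exp (\<beta> * A)"
  have sumA: "(\<Sum>k\<in>S. \<alpha> k) \<le> A" if "finite S" for S
    unfolding A_def using alpha_sum alpha_nonneg that by (intro sum_le_suminf) auto
  have part1: "\<exists>C. \<forall>a b. a < b \<longrightarrow> norm (prodM M a b) \<le> C"
  proof (intro exI allI impI)
    fix a b :: nat assume ab: "a < b"
    define P where "P = prodM M a b"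
    have ent: "P $ i $ j \<ge> 0 \<and> P $ i $ j \<le> E * \<beta> * (1 + 1/r)" for i j
    proof -
      have en: "\<forall>i. axis j (1::real) $ i \<ge> 0" by (simp add: axis_def)
      from prod_bd[OF less_imp_le[OF ab] en]
      have c: "\<forall>i. P $ i $ j \<ge> 0" and v: "V (P *v axis j 1) \<le> exp (\<beta> * (\<Sum>k=a..b. \<alpha> k)) * V (axis j 1)"
        by (simp_all add: P_def col_entry)
      have "exp (\<beta> * (\<Sum>k=a..b. \<alpha> k)) \<le> E"
        unfolding E_def using sumA[of "{a..b}"] b0 by simp
      moreover have "V (axis j 1) \<le> \<beta>" "V (axis j 1) \<ge> 0"
        using exhaust_2[of j] r_pos by (auto simp: V_def axis_def \<beta>_def)
      ultimately have "V (P *v axis j 1) \<le> E * \<beta>"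
        using v by (meson exp_ge_zero mult_mono order_trans)
      then have w: "P$1$j + r * P$2$j \<le> E * \<beta>" by (simp add: V_def col_entry)
      have p1: "P$1$j \<le> E*\<beta>" using w c r_pos by (smt (verit) mult_nonneg_nonneg)
      have "r * P$2$j \<le> E*\<beta>" using w c by (smt (verit))
      then have p2: "P$2$j \<le> E*\<beta>/r" using r_pos by (simp add: field_simps mult.commute)
      have Eb: "E*\<beta> \<ge> 0" using b0 by (simp add: E_def)
      have "E*\<beta>/r \<ge> 0" using Eb r_pos by simp
      have "E * \<beta> * (1 + 1/r) = E*\<beta> + E*\<beta>/r" by (simp add: field_simps)
      then show ?thesis using c p1 p2 Eb \<open>E*\<beta>/r \<ge> 0\<close> exhaust_2[of i] by auto
    qed
    have "norm P \<le> (\<Sum>i\<in>UNIV. \<Sum>j\<in>UNIV. \<bar>P$i$j\<bar>)" by (rule norm_mat_le)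
    also have "\<dots> \<le> (\<Sum>i\<in>(UNIV::2 set). \<Sum>j\<in>(UNIV::2 set). E * \<beta> * (1 + 1/r))"
      using ent by (intro sum_mono) auto
    finally show "norm (prodM M a b) \<le> 4 * (E * \<beta> * (1 + 1/r))" by (simp add: P_def sum_2)
  qed
  define T where "T = suminf (\<lambda>k. norm (Y k))"
  have VY: "V (Y j) \<le> (1 + r) * norm (Y j)" for j
  proof -
    have "Y j $ 1 \<le> norm (Y j)" "Y j $ 2 \<le> norm (Y j)"
      using component_le_norm_cart[of "Y j"] by (metis abs_ge_self order_trans)+
    then have "r * Y j $ 2 \<le> r * norm (Y j)" using r_pos by simp
    then show ?thesis using \<open>Y j $ 1 \<le> norm (Y j)\<close> by (simp add: V_def algebra_simps)
  qed
  have sumT: "(\<Sum>j<k. norm (Y j)) \<le> T" for k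
    unfolding T_def using Y_sum by (intro sum_le_suminf) auto
  have Xbd: "V (X k) \<le> exp (\<beta> * (\<Sum>j<k. \<alpha> j)) * (V (X 0) + (\<Sum>j<k. V (Y j)))" for k
  proof (induction k)
    case 0 then show ?case by simp
  next
    case (Suc k)
    have xn: "\<forall>i. X k $ i \<ge> 0" using X_nonneg by simp
    have yn: "\<forall>i. Y k $ i \<ge> 0" using Y_nonneg by simp
    define S where "S = exp (\<beta> * (\<Sum>j<k. \<alpha> j))"
    define R where "R = V (X 0) + (\<Sum>j<k. V (Y j))"
    have S1: "S \<ge> 1" unfolding S_def using b0 alpha_nonneg by (simp add: sum_nonneg)
    have R0: "R \<ge> 0" unfolding R_def using Vnn X_nonneg Y_nonneg by (simp add: sum_nonneg)
    have "V (X (Suc k)) \<le> V (M k *v X k + Y k)"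
      using rec[of k] r_pos unfolding vle_def V_def
      by (smt (verit) mult_left_mono)
    also have "\<dots> = V (M k *v X k) + V (Y k)" by (simp add: V_def algebra_simps)
    also have "\<dots> \<le> (1 + \<beta> * \<alpha> k) * (S * R) + V (Y k)"
      using step_V[OF xn] Suc.IH alpha_nonneg[of k] b0 unfolding S_def R_def
      by (smt (verit) mult_left_mono mult_nonneg_nonneg)
    also have "\<dots> \<le> exp (\<beta> * (\<Sum>j<k. \<alpha> j) + \<beta> * \<alpha> k) * R + exp (\<beta> * (\<Sum>j<k. \<alpha> j) + \<beta> * \<alpha> k) * V (Y k)"
    proof (rule add_mono)
      show "(1 + \<beta> * \<alpha> k) * (S * R) \<le> exp (\<beta> * (\<Sum>j<k. \<alpha> j) + \<beta> * \<alpha> k) * R"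
        using exp_step[of k "\<beta> * (\<Sum>j<k. \<alpha> j)"] R0 unfolding S_def
        by (metis mult.assoc mult_right_mono)
      have "1 \<le> exp (\<beta> * (\<Sum>j<k. \<alpha> j) + \<beta> * \<alpha> k)"
        using b0 alpha_nonneg by (simp add: sum_nonneg)
      then show "V (Y k) \<le> exp (\<beta> * (\<Sum>j<k. \<alpha> j) + \<beta> * \<alpha> k) * V (Y k)"
        using Vnn[OF yn] by (metis mult_right_mono mult_1)
    qed
    also have "\<dots> = exp (\<beta> * (\<Sum>j<Suc k. \<alpha> j)) * (V (X 0) + (\<Sum>j<Suc k. V (Y j)))"
      by (simp add: R_def distrib_left distrib_right algebra_simps)
    finally show ?case .
  qed
  have part2: "\<exists>C. \<forall>k. norm (X k) \<le> C"
  proof (intro exI allI)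
    fix k
    have xn: "X k $ 1 \<ge> 0" "X k $ 2 \<ge> 0" using X_nonneg by auto
    have e: "exp (\<beta> * (\<Sum>j<k. \<alpha> j)) \<le> E"
      unfolding E_def using sumA[of "{..<k}"] b0 by simp
    have "(\<Sum>j<k. V (Y j)) \<le> (\<Sum>j<k. (1 + r) * norm (Y j))" by (intro sum_mono VY)
    also have "\<dots> \<le> (1 + r) * T" using sumT[of k] r_pos by (simp add: sum_distrib_left[symmetric])
    finally have s: "(\<Sum>j<k. V (Y j)) \<le> (1 + r) * T" .
    have R0: "V (X 0) + (\<Sum>j<k. V (Y j)) \<ge> 0" using Vnn X_nonneg Y_nonneg by (simp add: sum_nonneg)
    have "V (X k) \<le> E * (V (X 0) + (\<Sum>j<k. V (Y j)))"
      using Xbd[of k] e R0 by (meson mult_right_mono order_trans)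
    also have "\<dots> \<le> E * (V (X 0) + (1 + r) * T)" using s by (simp add: E_def)
    finally have vk: "V (X k) \<le> E * (V (X 0) + (1 + r) * T)" .
    have "norm (X k) \<le> \<bar>X k $ 1\<bar> + \<bar>X k $ 2\<bar>" using norm_le_l1_cart[of "X k"] by (simp add: sum_2)
    also have "\<dots> = X k $ 1 + X k $ 2" using xn by simp
    also have "\<dots> \<le> (1 + 1/r) * V (X k)"
    proof -
      have "X k $ 2 = (r * X k $ 2) / r" using r_pos by simp
      also have "\<dots> \<le> V (X k) / r" using r_pos xn by (intro divide_right_mono) (auto simp: V_def)
      finally have "X k $ 2 \<le> V (X k) / r" .
      moreover have "X k $ 1 \<le> V (X k)" using xn r_pos by (simp add: V_def)
      ultimately show ?thesis by (simp add: algebra_simps)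
    qed
    also have "\<dots> \<le> (1 + 1/r) * (E * (V (X 0) + (1 + r) * T))"
      using vk r_pos by (intro mult_left_mono) auto
    finally show "norm (X k) \<le> (1 + 1/r) * (E * (V (X 0) + (1 + r) * T))" .
  qed
  show ?thesis using part1 part2 by blast
qed

end
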